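(* Let $(\mathfrak g,[\cdot,\cdot],\alpha,\varepsilon,B)$ be a quadratic color Hom-Lie algebra and let $\beta$ be a symmetric automorphism of it, i.e. $\beta:\mathfrak g\to\mathfrak g$ is an even bijective linear map with $\beta([x,y])=[\beta(x),\beta(y)]$, $\beta\circ\alpha=\alpha\circ\beta$, and $B(\beta(x),y)=B(x,\beta(y))$ for all $x,y\in\mathfrak g$. Define $[\cdot,\cdot]_\beta=\beta\circ[\cdot,\cdot]$ and $B_\beta(x,y)=B(\beta(x),y)$. Then $(\mathfrak g,[\cdot,\cdot]_\beta,\beta\circ\alpha,\varepsilon,B_\beta)$ is a quadratic color Hom-Lie algebra.
   Context: $\mathbb K$ is a field of characteristic zero and $\Gamma$ an abelian group. A bicharacter is a map $\varepsilon:\Gamma\times\Gamma\to\mathbb K\setminus\{0\}$ with $\varepsilon(a,b)\varepsilon(b,a)=1$, $\varepsilon(a,b+c)=\varepsilon(a,b)\varepsilon(a,c)$, $\varepsilon(a+b,c)=\varepsilon(a,c)\varepsilon(b,c)$; for homogeneous $x,y$, $\varepsilon(x,y)$ means $\varepsilon(\deg x,\deg y)$. Even maps preserve degree. A color Hom-Lie algebra $(\mathfrak g,[\cdot,\cdot],\alpha,\varepsilon)$ is a $\Gamma$-graded vector space with even bilinear bracket and even linear $\alpha$ such that, for homogeneous $x,y,z$, $[x,y]=-\varepsilon(x,y)[y,x]$ and $\varepsilon(z,x)[\alpha(x),[y,z]]+\varepsilon(x,y)[\alpha(y),[z,x]]+\varepsilon(y,z)[\alpha(z),[x,y]]=0$.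 It is quadratic, written $(\mathfrak g,[\cdot,\cdot],\alpha,\varepsilon,B)$, if $B$ is a nondegenerate bilinear form on $\mathfrak g$ which is $\varepsilon$-symmetric ($B(x,y)=\varepsilon(x,y)B(y,x)$), invariant ($B([x,y],z)=B(x,[y,z])$), and such that $B(\alpha(x),y)=B(x,\alpha(y))$ for all $x,y$. *)

theory Defs
  imports Main "HOL.Vector_Spaces"
begin

text \<open>The underlying K-vector space is a type 'v with scalar multiplication scale
  (locale vector_space); the Gamma-grading is a family of subspaces G indexed by
  the abelian group 'g, whose (internal) direct sum is the whole space.\<close>

definition bicharacter :: "('g::ab_group_add \<Rightarrow> 'g \<Rightarrow> 'k::field) \<Rightarrow> bool" where
  "bicharacter eps \<longleftrightarrow>
     (\<forall>a b. eps a b \<noteq> 0) \<and>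
     (\<forall>a b. eps a b * eps b a = 1) \<and>
     (\<forall>a b c. eps a (b + c) = eps a b * eps a c) \<and>
     (\<forall>a b c. eps (a + b) c = eps a c * eps b c)"

definition graded_space ::
  "('k::field \<Rightarrow> 'v::ab_group_add \<Rightarrow> 'v) \<Rightarrow> ('g::ab_group_add \<Rightarrow> 'v set) \<Rightarrow> bool" where
  "graded_space scale G \<longleftrightarrow>
     vector_space scale \<and>
     (\<forall>a. module.subspace scale (G a)) \<and>
     (\<forall>v. \<exists>!c. finite {a. c a \<noteq> 0} \<and> (\<forall>a. c a \<in> G a) \<and> v = sum c {a. c a \<noteq> 0})"

definition even_map :: "('g \<Rightarrow> 'v set) \<Rightarrow> ('v \<Rightarrow> 'v) \<Rightarrow> bool" where
  "even_map G f \<longleftrightarrow> (\<forall>a. \<forall>x\<in>G a. f x \<in> G a)"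

definition even_bilinear_bracket ::
  "('k::field \<Rightarrow> 'v::ab_group_add \<Rightarrow> 'v) \<Rightarrow> ('g::ab_group_add \<Rightarrow> 'v set) \<Rightarrow> ('v \<Rightarrow> 'v \<Rightarrow> 'v) \<Rightarrow> bool" where
  "even_bilinear_bracket scale G br \<longleftrightarrow>
     (\<forall>x. Vector_Spaces.linear scale scale (br x)) \<and>
     (\<forall>y. Vector_Spaces.linear scale scale (\<lambda>x. br x y)) \<and>
     (\<forall>a b. \<forall>x\<in>G a. \<forall>y\<in>G b. br x y \<in> G (a + b))"

definition color_hom_lie ::
  "('k::field \<Rightarrow> 'v::ab_group_add \<Rightarrow> 'v) \<Rightarrow> ('g::ab_group_add \<Rightarrow> 'v set) \<Rightarrow>
   ('v \<Rightarrow> 'v \<Rightarrow> 'v) \<Rightarrow> ('v \<Rightarrow> 'v) \<Rightarrow> ('g \<Rightarrow> 'g \<Rightarrow> 'k) \<Rightarrow> bool" where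
  "color_hom_lie scale G br alpha eps \<longleftrightarrow>
     graded_space scale G \<and> bicharacter eps \<and>
     even_bilinear_bracket scale G br \<and>
     Vector_Spaces.linear scale scale alpha \<and> even_map G alpha \<and>
     (\<forall>a b. \<forall>x\<in>G a. \<forall>y\<in>G b. br x y = - scale (eps a b) (br y x)) \<and>
     (\<forall>a b c. \<forall>x\<in>G a. \<forall>y\<in>G b. \<forall>z\<in>G c.
        scale (eps c a) (br (alpha x) (br y z)) + scale (eps a b) (br (alpha y) (br z x))
        + scale (eps b c) (br (alpha z) (br x y)) = 0)"

definition quadratic_color_hom_lie ::
  "('k::field \<Rightarrow> 'v::ab_group_add \<Rightarrow> 'v) \<Rightarrow> ('g::ab_group_add \<Rightarrow> 'v set) \<Rightarrow>
   ('v \<Rightarrow> 'v \<Rightarrow> 'v) \<Rightarrow> ('v \<Rightarrow> 'v) \<Rightarrow> ('g \<Rightarrow> 'g \<Rightarrow> 'k) \<Rightarrow> ('v \<Rightarrow> 'v \<Rightarrow> 'k) \<Rightarrow> bool" where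
  "quadratic_color_hom_lie scale G br alpha eps B \<longleftrightarrow>
     color_hom_lie scale G br alpha eps \<and>
     (\<forall>x. Vector_Spaces.linear scale (*) (B x)) \<and>
     (\<forall>y. Vector_Spaces.linear scale (*) (\<lambda>x. B x y)) \<and>
     (\<forall>x. (\<forall>y. B x y = 0) \<longrightarrow> x = 0) \<and>
     (\<forall>y. (\<forall>x. B x y = 0) \<longrightarrow> y = 0) \<and>
     (\<forall>a b. \<forall>x\<in>G a. \<forall>y\<in>G b. B x y = eps a b * B y x) \<and>
     (\<forall>x y z. B (br x y) z = B x (br y z)) \<and>
     (\<forall>x y. B (alpha x) y = B x (alpha y))"

definition symmetric_automorphism ::
  "('k::field \<Rightarrow> 'v::ab_group_add \<Rightarrow> 'v) \<Rightarrow> ('g \<Rightarrow> 'v set) \<Rightarrow>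
   ('v \<Rightarrow> 'v \<Rightarrow> 'v) \<Rightarrow> ('v \<Rightarrow> 'v) \<Rightarrow> ('v \<Rightarrow> 'v \<Rightarrow> 'k) \<Rightarrow> ('v \<Rightarrow> 'v) \<Rightarrow> bool" where
  "symmetric_automorphism scale G br alpha B beta \<longleftrightarrow>
     Vector_Spaces.linear scale scale beta \<and> bij beta \<and> even_map G beta \<and>
     (\<forall>x y. beta (br x y) = br (beta x) (beta y)) \<and>
     beta \<circ> alpha = alpha \<circ> beta \<and>
     (\<forall>x y. B (beta x) y = B x (beta y))"

end

theory Submission
  imports Defs
begin

theorem mainTheorem2:
  fixes scale :: "'k::field_char_0 \<Rightarrow> 'v::ab_group_add \<Rightarrow> 'v"
    and G :: "'g::ab_group_add \<Rightarrow> 'v set"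
    and br :: "'v \<Rightarrow> 'v \<Rightarrow> 'v" and alpha beta :: "'v \<Rightarrow> 'v"
    and eps :: "'g \<Rightarrow> 'g \<Rightarrow> 'k" and B :: "'v \<Rightarrow> 'v \<Rightarrow> 'k"
  assumes "quadratic_color_hom_lie scale G br alpha eps B"
    and "symmetric_automorphism scale G br alpha B beta"
  shows "quadratic_color_hom_lie scale G (\<lambda>x y. beta (br x y)) (beta \<circ> alpha) eps
           (\<lambda>x y. B (beta x) y)"
proof -
  note Q = assms(1)[unfolded quadratic_color_hom_lie_def color_hom_lie_def even_bilinear_bracket_def]
  note S = assms(2)[unfolded symmetric_automorphism_def]
  have lb: "Vector_Spaces.linear scale scale beta" using S by blast
  have bij: "bij beta" using S by blast
  have evb: "even_map G beta" using S by blast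
  have hom: "\<And>x y. beta (br x y) = br (beta x) (beta y)" using S by blast
  have comm: "\<And>x. beta (alpha x) = alpha (beta x)" using S by (metis comp_apply)
  have Bs: "\<And>x y. B (beta x) y = B x (beta y)" using S by blast
  have bsc: "\<And>c v. beta (scale c v) = scale c (beta v)" using lb unfolding linear_iff by blast
  have badd: "\<And>u v. beta (u + v) = beta u + beta v" using lb unfolding linear_iff by blast
  have bneg: "\<And>v. beta (- v) = - beta v" using lb module_hom.neg unfolding linear_def by blast
  have b0: "beta 0 = 0" using lb module_hom.zero unfolding linear_def by blast
  have la: "Vector_Spaces.linear scale scale alpha" using Q by (elim conjE) blast
  have lbr1: "\<And>x. Vector_Spaces.linear scale scale (br x)" using Q by (elim conjE) blast
  have lbr2: "\<And>y. Vector_Spaces.linear scale scale (\<lambda>x. br x y)" using Q by (elim conjE) blast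
  have lB1: "\<And>x. Vector_Spaces.linear scale (*) (B x)" using Q by (elim conjE) blast
  have lB2: "\<And>y. Vector_Spaces.linear scale (*) (\<lambda>x. B x y)" using Q by (elim conjE) blast
  have nd1: "\<And>x. (\<forall>y. B x y = 0) \<Longrightarrow> x = 0" using Q by (elim conjE) blast
  have nd2: "\<And>y. (\<forall>x. B x y = 0) \<Longrightarrow> y = 0" using Q by (elim conjE) blast
  have esym: "\<And>a b x y. x \<in> G a \<Longrightarrow> y \<in> G b \<Longrightarrow> B x y = eps a b * B y x" using Q by (elim conjE) blast
  have inv: "\<And>x y z. B (br x y) z = B x (br y z)" using Q by (elim conjE) blast
  have Ba: "\<And>x y. B (alpha x) y = B x (alpha y)" using Q by (elim conjE) blast
  have skew: "\<And>a b x y. x \<in> G a \<Longrightarrow> y \<in> G b \<Longrightarrow> br x y = - scale (eps a b) (br y x)" using Q by (elim conjE) blast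
  have jac: "\<And>a b c x y z. x \<in> G a \<Longrightarrow> y \<in> G b \<Longrightarrow> z \<in> G c \<Longrightarrow>
        scale (eps c a) (br (alpha x) (br y z)) + scale (eps a b) (br (alpha y) (br z x))
        + scale (eps b c) (br (alpha z) (br x y)) = 0" using Q by (elim conjE) blast
  have grb: "\<And>a b x y. x \<in> G a \<Longrightarrow> y \<in> G b \<Longrightarrow> br x y \<in> G (a + b)" using Q by (elim conjE) blast
  have eva: "even_map G alpha" using Q by (elim conjE) blast
  have c1: "color_hom_lie scale G (\<lambda>x y. beta (br x y)) (beta \<circ> alpha) eps"
    unfolding color_hom_lie_def even_bilinear_bracket_def
  proof (intro conjI allI ballI)
    show "graded_space scale G" "bicharacter eps" using Q by blast+
    fix x show "Vector_Spaces.linear scale scale (\<lambda>y. beta (br x y))"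
      using Vector_Spaces.linear_compose[OF lbr1 lb] by (simp add: comp_def)
  next
    fix y show "Vector_Spaces.linear scale scale (\<lambda>x. beta (br x y))"
      using Vector_Spaces.linear_compose[OF lbr2 lb] by (simp add: comp_def)
  next
    fix a b x y assume "x \<in> G a" "y \<in> G b"
    then show "beta (br x y) \<in> G (a + b)" using grb evb unfolding even_map_def by blast
  next
    show "Vector_Spaces.linear scale scale (beta \<circ> alpha)"
      using Vector_Spaces.linear_compose[OF la lb] .
  next
    show "even_map G (beta \<circ> alpha)" using eva evb unfolding even_map_def by simp
  next
    fix a b x y assume "x \<in> G a" "y \<in> G b"
    then show "beta (br x y) = - scale (eps a b) (beta (br y x))"
      using skew bsc bneg by metis
  next
    fix a b c x y z assume h: "x \<in> G a" "y \<in> G b" "z \<in> G c"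
    have "scale (eps c a) (beta (br ((beta \<circ> alpha) x) (beta (br y z)))) +
        scale (eps a b) (beta (br ((beta \<circ> alpha) y) (beta (br z x)))) +
        scale (eps b c) (beta (br ((beta \<circ> alpha) z) (beta (br x y))))
      = beta (beta (scale (eps c a) (br (alpha x) (br y z)) + scale (eps a b) (br (alpha y) (br z x))
        + scale (eps b c) (br (alpha z) (br x y))))"
      by (simp add: hom badd bsc)
    also have "\<dots> = 0" using jac[OF h] b0 by simp
    finally show "scale (eps c a) (beta (br ((beta \<circ> alpha) x) (beta (br y z)))) +
        scale (eps a b) (beta (br ((beta \<circ> alpha) y) (beta (br z x)))) +
        scale (eps b c) (beta (br ((beta \<circ> alpha) z) (beta (br x y)))) = 0" .
  qed
  show ?thesis unfolding quadratic_color_hom_lie_def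
  proof (intro conjI allI ballI impI c1)
    fix x show "Vector_Spaces.linear scale (*) (B (beta x))" using lB1 .
  next
    fix y show "Vector_Spaces.linear scale (*) (\<lambda>x. B (beta x) y)"
      using Vector_Spaces.linear_compose[OF lb lB2] by (simp add: comp_def)
  next
    fix x assume "\<forall>y. B (beta x) y = 0"
    then have "beta x = 0" using nd1 by blast
    then show "x = 0" using bij b0 by (metis bij_def injD)
  next
    fix y assume h: "\<forall>x. B (beta x) y = 0"
    have "\<forall>x. B x y = 0"
    proof
      fix x obtain u where "x = beta u" using bij by (metis bij_def surjD)
      then show "B x y = 0" using h by simp
    qed
    then show "y = 0" using nd2 by blast
  next
    fix a b x y assume h: "x \<in> G a" "y \<in> G b"
    have "beta y \<in> G b" using h evb unfolding even_map_def by blast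
    then show "B (beta x) y = eps a b * B (beta y) x" using esym[OF h(1)] Bs by metis
  next
    fix x y z
    have "B (beta (beta (br x y))) z = B (beta (br x y)) (beta z)" by (rule Bs)
    also have "\<dots> = B (beta x) (beta (br y z))" by (simp add: hom inv)
    finally show "B (beta (beta (br x y))) z = B (beta x) (beta (br y z))" .
  next
    fix x y
    have "B (beta ((beta \<circ> alpha) x)) y = B (alpha (beta x)) (beta y)" using Bs[of "alpha (beta x)" y] comm by simp
    also have "\<dots> = B (beta x) ((beta \<circ> alpha) y)" by (simp add: Ba comm)
    finally show "B (beta ((beta \<circ> alpha) x)) y = B (beta x) ((beta \<circ> alpha) y)" .
  qed
qed

end
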